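(* Let $n\ge 1$, $m,m'\ge0$, $\alpha\in\mathbb{Z}_{\ge0}^m$, $\beta\in\mathbb{Z}_{\ge0}^{m'}$. The dimension of the space of $S_n$-invariants in the homogeneous component of $\mathbb{C}[X_{n\times m};\Theta_{n\times m'}]$ of degree $\alpha$ in the commuting variables and $\beta$ in the Grassmannian variables equals the number of multiset partitions $\pi$ with content $\{\!\{1^{\alpha_1},\dots,m^{\alpha_m},\bar1^{\beta_1},\dots,\overline{m'}^{\beta_{m'}}\}\!\}$ and at most $n$ parts, such that no barred entry occurs more than once in any part, and every part containing an odd number of barred entries occurs at most once in $\pi$. (Equivalently, the $S_n$-invariants of $\mathbb{C}[X_{n\times m};\Theta_{n\times m'}]$ have a basis indexed by such super multiset partitions of length at most $n$.)
   Context: $\mathbb{C}[X_{n\times m};\Theta_{n\times m'}]$ is the associative $\mathbb{C}$-algebra generated by $x_{rk}$ ($1\le r\le n$, $1\le k\le m$) and $\theta_{ri}$ ($1\le r\le n$, $1\le i\le m'$) with: the $x_{rk}$ commute with each other and with all $\theta_{si}$; $\theta_{ri}\theta_{sj}=-\theta_{sj}\theta_{ri}$ for $(r,i)\ne(s,j)$; $\theta_{ri}^2=0$. $S_n$ acts by algebra automorphisms via $\sigma(x_{rk})=x_{\sigma(r)k}$, $\sigma(\theta_{ri})=\theta_{\sigma(r)i}$. The degree-$(\alpha,\beta)$ component is spanned by monomials of total degree $\alpha_k$ in $x_{1k},\dots,x_{nk}$ for each $k$ and $\beta_i$ in $\theta_{1i},\dots,\theta_{ni}$ for each $i$. Multisets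 are over the alphabet $\{1,\dots,m\}\cup\{\bar1,\dots,\overline{m'}\}$, entries $\bar j$ being called barred; a multiset partition of $S$ is a multiset of non-empty multisets (parts) whose multiset union is $S$. *)

theory Defs
  imports Complex_Main "HOL-Library.Multiset" "HOL-Combinatorics.Permutations" "HOL-Library.Function_Algebras"
begin

(* Monomials of C[X_{n x m}; Theta_{n x m'}], indices 0-based:
   a monomial is a pair (e, T) standing for
     prod_{r,k} x_{rk}^(e r k) * theta_{a_1} ... theta_{a_p}
   where T = {a_1 < ... < a_p} (lexicographic order on pairs (r,i))
   is the set of Grassmann variables occurring (theta^2 = 0). These
   monomials form a C-basis of the algebra. *)
type_synonym smon = "(nat \<Rightarrow> nat \<Rightarrow> nat) \<times> (nat \<times> nat) set"

definition lexless :: "nat \<times> nat \<Rightarrow> nat \<times> nat \<Rightarrow> bool" where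
  "lexless a b \<longleftrightarrow> fst a < fst b \<or> (fst a = fst b \<and> snd a < snd b)"

definition mons :: "nat \<Rightarrow> nat \<Rightarrow> nat \<Rightarrow> (nat \<Rightarrow> nat) \<Rightarrow> (nat \<Rightarrow> nat) \<Rightarrow> smon set" where
  "mons n m m' \<alpha> \<beta> = {(e, T).
      (\<forall>r k. \<not> (r < n \<and> k < m) \<longrightarrow> e r k = 0) \<and>
      T \<subseteq> {..<n} \<times> {..<m'} \<and>
      (\<forall>k<m. (\<Sum>r<n. e r k) = \<alpha> k) \<and>
      (\<forall>i<m'. card {r. (r, i) \<in> T} = \<beta> i)}"

(* sigma(x_{rk}) = x_{sigma r, k}, sigma(theta_{ri}) = theta_{sigma r, i} *)
definition act_mon :: "(nat \<Rightarrow> nat) \<Rightarrow> smon \<Rightarrow> smon" where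
  "act_mon \<sigma> \<mu> = ((\<lambda>r k. fst \<mu> (inv \<sigma> r) k), (\<lambda>(r, i). (\<sigma> r, i)) ` snd \<mu>)"

(* sign arising from reordering theta_{sigma a_1} ... theta_{sigma a_p}
   into increasing order: sigma(mu) = act_sign sigma mu * act_mon sigma mu *)
definition act_sign :: "(nat \<Rightarrow> nat) \<Rightarrow> smon \<Rightarrow> complex" where
  "act_sign \<sigma> \<mu> = (-1) ^ card {(a, b). a \<in> snd \<mu> \<and> b \<in> snd \<mu> \<and> lexless a b \<and>
        lexless (\<sigma> (fst b), snd b) (\<sigma> (fst a), snd a)}"

(* elements of the degree-(alpha,beta) component, as coefficient functions
   on the monomial basis, which are S_n-invariant *)
definition inv_component :: "nat \<Rightarrow> nat \<Rightarrow> nat \<Rightarrow> (nat \<Rightarrow> nat) \<Rightarrow> (nat \<Rightarrow> nat) \<Rightarrow> (smon \<Rightarrow> complex) set" where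
  "inv_component n m m' \<alpha> \<beta> = {f.
      (\<forall>\<mu>. \<mu> \<notin> mons n m m' \<alpha> \<beta> \<longrightarrow> f \<mu> = 0) \<and>
      (\<forall>\<sigma>. \<sigma> permutes {..<n} \<longrightarrow>
         (\<forall>\<mu> \<in> mons n m m' \<alpha> \<beta>. f (act_mon \<sigma> \<mu>) = act_sign \<sigma> \<mu> * f \<mu>))}"

definition cdim :: "(smon \<Rightarrow> complex) set \<Rightarrow> nat" where
  "cdim V = vector_space.dim (\<lambda>c f x. c * f x) V"

(* alphabet: Inl k = unbarred k, Inr i = barred i *)
definition content :: "nat \<Rightarrow> nat \<Rightarrow> (nat \<Rightarrow> nat) \<Rightarrow> (nat \<Rightarrow> nat) \<Rightarrow> (nat + nat) multiset" where
  "content m m' \<alpha> \<beta> = (\<Sum>k<m. replicate_mset (\<alpha> k) (Inl k)) + (\<Sum>i<m'. replicate_mset (\<beta> i) (Inr i))"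

definition barred_count :: "(nat + nat) multiset \<Rightarrow> nat" where
  "barred_count p = size (filter_mset (\<lambda>x. \<exists>i. x = Inr i) p)"

definition super_mset_partitions :: "nat \<Rightarrow> nat \<Rightarrow> nat \<Rightarrow> (nat \<Rightarrow> nat) \<Rightarrow> (nat \<Rightarrow> nat) \<Rightarrow> (nat + nat) multiset multiset set" where
  "super_mset_partitions n m m' \<alpha> \<beta> = {\<pi>.
      (\<forall>p \<in># \<pi>. p \<noteq> {#}) \<and> sum_mset \<pi> = content m m' \<alpha> \<beta> \<and> size \<pi> \<le> n \<and>
      (\<forall>p \<in># \<pi>. \<forall>i. count p (Inr i) \<le> 1) \<and>
      (\<forall>p \<in># \<pi>. odd (barred_count p) \<longrightarrow> count \<pi> p = 1)}"

end

theory Submission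
  imports Defs
begin

lemma lexless_irrefl: "\<not> lexless a a" by (auto simp: lexless_def)
lemma lexless_trans: "lexless a b \<Longrightarrow> lexless b c \<Longrightarrow> lexless a c" by (auto simp: lexless_def)
lemma lexless_total: "a \<noteq> b \<Longrightarrow> lexless a b \<or> lexless b a" by (auto simp: lexless_def prod_eq_iff)
lemma lexless_asym: "lexless a b \<Longrightarrow> \<not> lexless b a" by (auto simp: lexless_def)

definition Inv :: "(nat \<times> nat \<Rightarrow> nat \<times> nat) \<Rightarrow> (nat \<times> nat) set \<Rightarrow> ((nat \<times> nat) \<times> (nat \<times> nat)) set" where
  "Inv g T = {(a, b). a \<in> T \<and> b \<in> T \<and> lexless a b \<and> lexless (g b) (g a)}"

lemma Inv_sub: "Inv g T \<subseteq> T \<times> T" by (auto simp: Inv_def)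

lemma neg1_pow_add_even:
  "(-1::complex) ^ (a + 2 * k) = (-1) ^ a"
  by (simp add: power_add power_mult)

lemma parity_symdiff:
  assumes "finite A" "finite D"
  shows "(-1::complex) ^ card ((A - D) \<union> (D - A)) = (-1) ^ card A * (-1) ^ card D"
proof -
  have c1: "card ((A - D) \<union> (D - A)) = card (A - D) + card (D - A)"
    by (rule card_Un_disjoint) (use assms in auto)
  have c2: "card A = card (A - D) + card (A \<inter> D)"
  proof -
    have "A = (A - D) \<union> (A \<inter> D)" by auto
    hence "card A = card ((A - D) \<union> (A \<inter> D))" by simp
    also have "\<dots> = card (A - D) + card (A \<inter> D)"
      by (rule card_Un_disjoint) (use assms in auto)
    finally show ?thesis .
  qed
  have c3: "card D = card (D - A) + card (A \<inter> D)"
  proof -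
    have "D = (D - A) \<union> (A \<inter> D)" by auto
    hence "card D = card ((D - A) \<union> (A \<inter> D))" by simp
    also have "\<dots> = card (D - A) + card (A \<inter> D)"
      by (rule card_Un_disjoint) (use assms in auto)
    finally show ?thesis .
  qed
  have "card A + card D = card ((A - D) \<union> (D - A)) + 2 * card (A \<inter> D)"
    using c1 c2 c3 by simp
  hence "(-1::complex) ^ (card A + card D) = (-1) ^ card ((A - D) \<union> (D - A))"
    by (metis neg1_pow_add_even)
  thus ?thesis by (simp add: power_add)
qed

lemma Inv_cocycle:
  assumes T: "finite T" and g: "inj g" and h: "inj h"
  shows "(-1::complex) ^ card (Inv (h \<circ> g) T) = (-1) ^ card (Inv g T) * (-1) ^ card (Inv h (g ` T))"
proof -
  define D where "D = {(a, b). a \<in> T \<and> b \<in> T \<and> lexless a b \<and>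
     ((lexless (g a) (g b) \<and> lexless (h (g b)) (h (g a))) \<or> (lexless (g b) (g a) \<and> lexless (h (g a)) (h (g b))))}"
  have neq: "lexless a b \<Longrightarrow> g a \<noteq> g b \<and> h (g a) \<noteq> h (g b)" for a b
    using g h lexless_irrefl by (metis injD)
  have C: "Inv (h \<circ> g) T = (Inv g T - D) \<union> (D - Inv g T)"
  proof (rule set_eqI, clarify)
    fix a b
    show "((a, b) \<in> Inv (h \<circ> g) T) = ((a, b) \<in> Inv g T - D \<union> (D - Inv g T))"
    proof (cases "a \<in> T \<and> b \<in> T \<and> lexless a b")
      case True
      with neq[of a b] lexless_total[of "g a" "g b"] lexless_total[of "h (g a)" "h (g b)"]
        lexless_asym[of "g a" "g b"] lexless_asym[of "h (g a)" "h (g b)"]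
      show ?thesis by (auto simp: Inv_def D_def)
    next
      case False
      thus ?thesis by (auto simp: Inv_def D_def)
    qed
  qed
  define F where "F = (\<lambda>(a, b). if lexless (g a) (g b) then (g a, g b) else (g b, g a))"
  have injF: "inj_on F D"
  proof (rule inj_onI, clarify)
    fix a b c d
    assume ab: "(a, b) \<in> D" and cd: "(c, d) \<in> D" and eq: "F (a, b) = F (c, d)"
    from ab have "lexless a b" by (auto simp: D_def)
    from cd have "lexless c d" by (auto simp: D_def)
    from eq have "(g a = g c \<and> g b = g d) \<or> (g a = g d \<and> g b = g c)"
      by (auto simp: F_def split: if_splits)
    hence "(a = c \<and> b = d) \<or> (a = d \<and> b = c)" using g by (auto dest: injD)
    thus "a = c \<and> b = d" using \<open>lexless a b\<close> \<open>lexless c d\<close> lexless_asym by blast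
  qed
  have imF: "F ` D = Inv h (g ` T)"
  proof (rule set_eqI, rule iffI)
    fix x assume "x \<in> F ` D"
    then obtain a b where ab: "(a, b) \<in> D" and x: "x = F (a, b)" by auto
    thus "x \<in> Inv h (g ` T)"
      by (auto simp: D_def F_def Inv_def dest: lexless_asym)
  next
    fix x assume "x \<in> Inv h (g ` T)"
    then obtain a b where x: "x = (g a, g b)" and a: "a \<in> T" and b: "b \<in> T"
      and l1: "lexless (g a) (g b)" and l2: "lexless (h (g b)) (h (g a))"
      by (auto simp: Inv_def)
    have "a \<noteq> b" using l1 lexless_irrefl by metis
    then consider "lexless a b" | "lexless b a" using lexless_total by blast
    thus "x \<in> F ` D"
    proof cases
      case 1
      hence "(a, b) \<in> D" using a b l1 l2 by (auto simp: D_def)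
      moreover have "F (a, b) = x" using l1 x by (simp add: F_def)
      ultimately show ?thesis by (metis image_eqI)
    next
      case 2
      hence "(b, a) \<in> D" using a b l1 l2 by (auto simp: D_def)
      moreover have "F (b, a) = x" using l1 x lexless_asym by (auto simp: F_def)
      ultimately show ?thesis by (metis image_eqI)
    qed
  qed
  have cD: "card D = card (Inv h (g ` T))"
    using card_image[OF injF] imF by simp
  have fA: "finite (Inv g T)" using T Inv_sub[of g T] finite_cartesian_product finite_subset by blast
  have "D \<subseteq> T \<times> T" by (auto simp: D_def)
  hence fD: "finite D" using T finite_cartesian_product finite_subset by blast
  show ?thesis using parity_symdiff[OF fA fD] C cD by simp
qed

definition sg :: "(nat \<Rightarrow> nat) \<Rightarrow> nat \<times> nat \<Rightarrow> nat \<times> nat" where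
  "sg \<sigma> = (\<lambda>x. (\<sigma> (fst x), snd x))"

lemma act_sign_Inv: "act_sign \<sigma> \<mu> = (-1) ^ card (Inv (sg \<sigma>) (snd \<mu>))"
  by (simp add: act_sign_def Inv_def sg_def)

lemma sg_case: "(\<lambda>(r, i). (\<sigma> r, i)) = sg \<sigma>"
  by (auto simp: sg_def fun_eq_iff)

lemma snd_act_mon: "snd (act_mon \<sigma> \<mu>) = sg \<sigma> ` snd \<mu>"
  by (simp add: act_mon_def sg_case)

lemma fst_act_mon: "fst (act_mon \<sigma> \<mu>) r k = fst \<mu> (inv \<sigma> r) k"
  by (simp add: act_mon_def)

lemma sg_comp: "sg (\<sigma> \<circ> \<tau>) = sg \<sigma> \<circ> sg \<tau>"
  by (simp add: sg_def fun_eq_iff)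

lemma inj_sg: "inj \<sigma> \<Longrightarrow> inj (sg \<sigma>)"
  by (auto simp: sg_def inj_def prod_eq_iff)

lemma act_mon_comp:
  assumes "bij \<sigma>" "bij \<tau>"
  shows "act_mon (\<sigma> \<circ> \<tau>) \<mu> = act_mon \<sigma> (act_mon \<tau> \<mu>)"
proof -
  have "inv (\<sigma> \<circ> \<tau>) = inv \<tau> \<circ> inv \<sigma>" using assms by (simp add: o_inv_distrib)
  hence "fst (act_mon (\<sigma> \<circ> \<tau>) \<mu>) = fst (act_mon \<sigma> (act_mon \<tau> \<mu>))"
    by (simp add: act_mon_def fun_eq_iff)
  moreover have "snd (act_mon (\<sigma> \<circ> \<tau>) \<mu>) = snd (act_mon \<sigma> (act_mon \<tau> \<mu>))"
    by (simp add: snd_act_mon sg_comp image_comp)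
  ultimately show ?thesis by (simp add: prod_eq_iff)
qed

lemma act_mon_id: "act_mon id \<mu> = \<mu>"
  by (simp add: act_mon_def prod_eq_iff image_iff)

lemma act_sign_id: "act_sign id \<mu> = 1"
proof -
  have "Inv (sg id) (snd \<mu>) = {}" by (auto simp: Inv_def sg_def dest: lexless_asym)
  thus ?thesis by (simp add: act_sign_Inv)
qed

lemma sign_cocycle:
  assumes "bij \<sigma>" "bij \<tau>" "finite (snd \<mu>)"
  shows "act_sign (\<sigma> \<circ> \<tau>) \<mu> = act_sign \<sigma> (act_mon \<tau> \<mu>) * act_sign \<tau> \<mu>"
  unfolding act_sign_Inv sg_comp snd_act_mon
  using Inv_cocycle[OF assms(3) inj_sg[OF bij_is_inj[OF assms(2)]] inj_sg[OF bij_is_inj[OF assms(1)]]]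
  by (simp add: mult.commute)

lemma mons_finite_T: "\<mu> \<in> mons n m m' \<alpha> \<beta> \<Longrightarrow> finite (snd \<mu>)"
  unfolding mons_def by (auto intro: finite_subset[of _ "{..<n} \<times> {..<m'}"] simp del: lessThan_iff)
   (meson finite_SigmaI finite_lessThan finite_subset)

lemma act_mon_mons:
  assumes p: "\<sigma> permutes {..<n}" and mu: "\<mu> \<in> mons n m m' \<alpha> \<beta>"
  shows "act_mon \<sigma> \<mu> \<in> mons n m m' \<alpha> \<beta>"
proof -
  obtain e T where eT: "\<mu> = (e, T)" by (cases \<mu>)
  have ip: "inv \<sigma> permutes {..<n}" using p by (rule permutes_inv)
  have z: "\<forall>r k. \<not> (r < n \<and> k < m) \<longrightarrow> e r k = 0" and Ts: "T \<subseteq> {..<n} \<times> {..<m'}"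
    and sa: "\<forall>k<m. (\<Sum>r<n. e r k) = \<alpha> k" and cb: "\<forall>i<m'. card {r. (r, i) \<in> T} = \<beta> i"
    using mu eT by (auto simp: mons_def)
  have 1: "\<forall>r k. \<not> (r < n \<and> k < m) \<longrightarrow> e (inv \<sigma> r) k = 0"
  proof (intro allI impI)
    fix r k assume "\<not> (r < n \<and> k < m)"
    thus "e (inv \<sigma> r) k = 0"
      using z permutes_not_in[OF ip, of r] permutes_in_image[OF ip, of r] by (cases "r < n") auto
  qed
  have 2: "sg \<sigma> ` T \<subseteq> {..<n} \<times> {..<m'}"
    using Ts permutes_in_image[OF p] by (auto simp: sg_def)
  have 3: "(\<Sum>r<n. e (inv \<sigma> r) k) = \<alpha> k" if "k < m" for k
  proof -
    have "(\<Sum>r<n. e (inv \<sigma> r) k) = (\<Sum>r<n. e r k)"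
      using sum.reindex_bij_betw[OF permutes_imp_bij[OF ip], of "\<lambda>r. e r k"] by simp
    thus ?thesis using sa that by simp
  qed
  have 4: "card {r. (r, i) \<in> sg \<sigma> ` T} = \<beta> i" if "i < m'" for i
  proof -
    have "{r. (r, i) \<in> sg \<sigma> ` T} = \<sigma> ` {r. (r, i) \<in> T}"
      apply (auto simp: sg_def image_iff) by (metis fst_conv snd_conv)
    hence "card {r. (r, i) \<in> sg \<sigma> ` T} = card {r. (r, i) \<in> T}"
      using card_image[OF inj_on_subset[OF permutes_inj[OF p]]] by simp
    thus ?thesis using cb that by simp
  qed
  show ?thesis using 1 2 3 4 eT
    by (simp add: mons_def act_mon_def snd_act_mon[of \<sigma> "(e,T)", simplified act_mon_def, simplified])
qed

definition rowsame :: "smon \<Rightarrow> nat \<Rightarrow> nat \<Rightarrow> bool" where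
  "rowsame \<mu> r s \<longleftrightarrow> (\<forall>k. fst \<mu> r k = fst \<mu> s k) \<and> (\<forall>i. (r, i) \<in> snd \<mu> \<longleftrightarrow> (s, i) \<in> snd \<mu>)"

lemma transp_lex:
  assumes rs: "r < (s::nat)"
  shows "(lexless (a1, a2) (b1, b2) \<and> lexless (transpose r s b1, b2) (transpose r s a1, a2)) \<longleftrightarrow>
    ((a1 = r \<and> b1 = s) \<or> (a1 = r \<and> r < b1 \<and> b1 < s) \<or> (r < a1 \<and> a1 < s \<and> b1 = s))"
  using rs by (cases "a1 = r"; cases "a1 = s"; cases "b1 = r"; cases "b1 = s") (auto simp: lexless_def)

lemma transp_Inv:
  assumes rs: "r < s"
  shows "Inv (sg (transpose r s)) T =
    {a\<in>T. fst a = r} \<times> {a\<in>T. fst a = s} \<union> {a\<in>T. fst a = r} \<times> {a\<in>T. r < fst a \<and> fst a < s}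
    \<union> {a\<in>T. r < fst a \<and> fst a < s} \<times> {a\<in>T. fst a = s}"
proof (rule set_eqI)
  fix x :: "(nat \<times> nat) \<times> (nat \<times> nat)"
  obtain a1 a2 b1 b2 where x: "x = ((a1, a2), (b1, b2))" by (metis prod.exhaust)
  show "x \<in> Inv (sg (transpose r s)) T \<longleftrightarrow> x \<in> {a\<in>T. fst a = r} \<times> {a\<in>T. fst a = s} \<union> {a\<in>T. fst a = r} \<times> {a\<in>T. r < fst a \<and> fst a < s}
    \<union> {a\<in>T. r < fst a \<and> fst a < s} \<times> {a\<in>T. fst a = s}"
    using transp_lex[OF rs, of a1 a2 b1 b2] rs unfolding x by (auto simp: Inv_def sg_def)
qed

lemma transp_sign_lt:
  assumes T: "finite (snd \<mu>)" and rs: "r < s" and same: "\<forall>i. (r, i) \<in> snd \<mu> \<longleftrightarrow> (s, i) \<in> snd \<mu>"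
  shows "act_sign (transpose r s) \<mu> = (-1) ^ card {i. (r, i) \<in> snd \<mu>}"
proof -
  define T where "T = snd \<mu>"
  define Rr where "Rr = {a\<in>T. fst a = r}"
  define Rs where "Rs = {a\<in>T. fst a = s}"
  define M where "M = {a\<in>T. r < fst a \<and> fst a < s}"
  have fin: "finite Rr" "finite Rs" "finite M" using T by (auto simp: Rr_def Rs_def M_def T_def)
  have I: "Inv (sg (transpose r s)) T = Rr \<times> Rs \<union> Rr \<times> M \<union> M \<times> Rs"
    unfolding Rr_def Rs_def M_def by (rule transp_Inv[OF rs])
  have d1: "(Rr \<times> Rs) \<inter> (Rr \<times> M) = {}" using rs by (auto simp: Rs_def M_def)
  have d2: "(Rr \<times> Rs \<union> Rr \<times> M) \<inter> (M \<times> Rs) = {}" using rs by (auto simp: Rr_def M_def)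
  have c: "card (Inv (sg (transpose r s)) T) = card Rr * card Rs + card Rr * card M + card M * card Rs"
    unfolding I using fin d1 d2
    by (simp add: card_Un_disjoint card_cartesian_product)
  have cr: "card Rr = card {i. (r, i) \<in> T}"
  proof -
    have "Rr = (\<lambda>i. (r, i)) ` {i. (r, i) \<in> T}" by (auto simp: Rr_def image_iff)
    thus ?thesis by (simp add: card_image inj_on_def)
  qed
  have cs: "card Rs = card {i. (r, i) \<in> T}"
  proof -
    have "Rs = (\<lambda>i. (s, i)) ` {i. (r, i) \<in> T}" using same by (auto simp: Rs_def T_def image_iff)
    thus ?thesis by (simp add: card_image inj_on_def)
  qed
  define t where "t = card {i. (r, i) \<in> T}"
  have "card (Inv (sg (transpose r s)) T) = t * t + 2 * (t * card M)"
    using c cr cs by (simp add: t_def algebra_simps)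
  hence "act_sign (transpose r s) \<mu> = (-1) ^ (t * t)"
    by (simp add: act_sign_Inv T_def neg1_pow_add_even)
  also have "\<dots> = (-1) ^ t" by (simp add: minus_one_power_iff)
  finally show ?thesis by (simp add: t_def T_def)
qed

lemma transp_sign:
  assumes T: "finite (snd \<mu>)" and rs: "r \<noteq> s" and same: "\<forall>i. (r, i) \<in> snd \<mu> \<longleftrightarrow> (s, i) \<in> snd \<mu>"
  shows "act_sign (transpose r s) \<mu> = (-1) ^ card {i. (r, i) \<in> snd \<mu>}"
proof (cases "r < s")
  case True thus ?thesis using transp_sign_lt[OF T True same] by simp
next
  case False
  hence "s < r" using rs by simp
  moreover have "{i. (s, i) \<in> snd \<mu>} = {i. (r, i) \<in> snd \<mu>}" using same by auto
  ultimately show ?thesis using transp_sign_lt[OF T, of s r] same by (simp add: transpose_commute)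
qed

lemma transp_fix:
  assumes "rowsame \<mu> r s"
  shows "act_mon (transpose r s) \<mu> = \<mu>"
proof -
  have E: "fst \<mu> r k = fst \<mu> s k" for k using assms by (simp add: rowsame_def)
  have E2: "(r, i) \<in> snd \<mu> \<longleftrightarrow> (s, i) \<in> snd \<mu>" for i using assms by (simp add: rowsame_def)
  have tf: "fst \<mu> (transpose r s x) k = fst \<mu> x k" for x k
  proof -
    consider "x = r" | "x = s" | "x \<noteq> r" "x \<noteq> s" by blast
    thus ?thesis
    proof cases
      case 1 thus ?thesis using E[of k] by (metis transpose_apply_first)
    next
      case 2 thus ?thesis using E[of k] by (metis transpose_apply_second)
    next
      case 3 thus ?thesis by (metis transpose_apply_other)
    qed
  qed
  have ti: "(transpose r s x, i) \<in> snd \<mu>" if "(x, i) \<in> snd \<mu>" for x i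
  proof -
    consider "x = r" | "x = s" | "x \<noteq> r" "x \<noteq> s" by blast
    thus ?thesis
    proof cases
      case 1 thus ?thesis using E2[of i] that by (metis transpose_apply_first)
    next
      case 2 thus ?thesis using E2[of i] that by (metis transpose_apply_second)
    next
      case 3 thus ?thesis using that by (metis transpose_apply_other)
    qed
  qed
  have "fst (act_mon (transpose r s) \<mu>) = fst \<mu>"
    using tf by (simp add: fun_eq_iff fst_act_mon)
  moreover have "sg (transpose r s) ` snd \<mu> = snd \<mu>"
  proof
    show "sg (transpose r s) ` snd \<mu> \<subseteq> snd \<mu>"
      using ti by (auto simp: sg_def)
    show "snd \<mu> \<subseteq> sg (transpose r s) ` snd \<mu>"
    proof
      fix x assume x: "x \<in> snd \<mu>"
      have "sg (transpose r s) (sg (transpose r s) x) = x" by (simp add: sg_def)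
      moreover have "sg (transpose r s) x \<in> snd \<mu>"
        using x ti[of "fst x" "snd x"] by (simp add: sg_def)
      ultimately show "x \<in> sg (transpose r s) ` snd \<mu>" by (metis image_eqI)
    qed
  qed
  ultimately show ?thesis by (simp add: prod_eq_iff snd_act_mon)
qed

lemma stab_sign:
  assumes fin: "finite (snd \<mu>)"
    and Gd: "\<forall>r<n. \<forall>s<n. r \<noteq> s \<and> rowsame \<mu> r s \<longrightarrow> even (card {i. (r, i) \<in> snd \<mu>})"
  shows "\<sigma> permutes {..<n} \<Longrightarrow> act_mon \<sigma> \<mu> = \<mu> \<Longrightarrow> act_sign \<sigma> \<mu> = 1"
proof (induct "card {x. \<sigma> x \<noteq> x}" arbitrary: \<sigma> rule: less_induct)
  case less
  note p = less.prems(1) and fx = less.prems(2)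
  show ?case
  proof (cases "\<sigma> = id")
    case True thus ?thesis by (simp add: act_sign_id)
  next
    case False
    then obtain r where r: "\<sigma> r \<noteq> r" by (auto simp: fun_eq_iff)
    define s where "s = \<sigma> r"
    have rn: "r < n" using r permutes_not_in[OF p] by auto
    have sn: "s < n" using rn permutes_in_image[OF p] by (simp add: s_def)
    have rs: "r \<noteq> s" using r s_def by auto
    have invs: "inv \<sigma> s = r" using permutes_inverses[OF p] s_def by simp
    have same: "rowsame \<mu> r s"
    proof -
      have "fst \<mu> r k = fst \<mu> s k" for k
        using fun_cong[OF fun_cong[OF arg_cong[OF fx, of fst], of s], of k] invs
        by (simp add: fst_act_mon)
      moreover have "(r, i) \<in> snd \<mu> \<longleftrightarrow> (s, i) \<in> snd \<mu>" for i
      proof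
        assume "(r, i) \<in> snd \<mu>"
        hence "sg \<sigma> (r, i) \<in> snd (act_mon \<sigma> \<mu>)" by (simp add: snd_act_mon)
        thus "(s, i) \<in> snd \<mu>" using fx by (simp add: sg_def s_def)
      next
        assume "(s, i) \<in> snd \<mu>"
        hence "(s, i) \<in> sg \<sigma> ` snd \<mu>" using fx snd_act_mon by metis
        then obtain x where x: "x \<in> snd \<mu>" "(s, i) = sg \<sigma> x" by auto
        hence "\<sigma> (fst x) = \<sigma> r" "snd x = i" by (auto simp: sg_def s_def)
        hence "x = (r, i)" using permutes_inj[OF p] by (auto dest: injD simp: prod_eq_iff)
        thus "(r, i) \<in> snd \<mu>" using x by simp
      qed
      ultimately show ?thesis by (simp add: rowsame_def)
    qed
    define \<tau> where "\<tau> = transpose r s"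
    define \<rho> where "\<rho> = \<tau> \<circ> \<sigma>"
    have tp: "\<tau> permutes {..<n}" using rn sn by (simp add: \<tau>_def permutes_swap_id)
    have rp: "\<rho> permutes {..<n}" unfolding \<rho>_def by (rule permutes_compose[OF p tp])
    have tfix: "act_mon \<tau> \<mu> = \<mu>" using transp_fix[OF same] by (simp add: \<tau>_def)
    have rfix: "act_mon \<rho> \<mu> = \<mu>"
      unfolding \<rho>_def using act_mon_comp[OF permutes_bij[OF tp] permutes_bij[OF p]] fx tfix by simp
    have sub: "{x. \<rho> x \<noteq> x} \<subset> {x. \<sigma> x \<noteq> x}"
    proof
      show "{x. \<rho> x \<noteq> x} \<subseteq> {x. \<sigma> x \<noteq> x}"
      proof (clarify)
        fix x assume a: "\<rho> x \<noteq> x" "\<sigma> x = x"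
        have "x \<noteq> r" using a r by auto
        moreover have "x \<noteq> s" using a(2) r s_def permutes_inj[OF p] by (metis injD)
        ultimately show False using a by (simp add: \<rho>_def \<tau>_def)
      qed
      have "\<rho> r = r" by (simp add: \<rho>_def \<tau>_def s_def)
      thus "{x. \<rho> x \<noteq> x} \<noteq> {x. \<sigma> x \<noteq> x}" using r by auto
    qed
    have "finite {x. \<sigma> x \<noteq> x}"
      using permutes_not_in[OF p] by (auto intro: finite_subset[of _ "{..<n}"])
    hence "card {x. \<rho> x \<noteq> x} < card {x. \<sigma> x \<noteq> x}" using sub psubset_card_mono by blast
    hence IH: "act_sign \<rho> \<mu> = 1" using less.hyps rp rfix by blast
    have "\<sigma> = \<tau> \<circ> \<rho>" by (simp add: \<rho>_def \<tau>_def fun_eq_iff)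
    hence "act_sign \<sigma> \<mu> = act_sign \<tau> (act_mon \<rho> \<mu>) * act_sign \<rho> \<mu>"
      using sign_cocycle[OF permutes_bij[OF tp] permutes_bij[OF rp] fin] by simp
    also have "\<dots> = act_sign \<tau> \<mu>" using rfix IH by simp
    also have "\<dots> = (-1) ^ card {i. (r, i) \<in> snd \<mu>}"
      unfolding \<tau>_def by (rule transp_sign[OF fin rs]) (use same in \<open>simp add: rowsame_def\<close>)
    also have "\<dots> = 1" using Gd rn sn rs same by simp
    finally show ?thesis .
  qed
qed

definition rowc :: "nat \<Rightarrow> nat \<Rightarrow> smon \<Rightarrow> nat \<Rightarrow> (nat + nat) multiset" where
  "rowc m m' \<mu> r = (\<Sum>k<m. replicate_mset (fst \<mu> r k) (Inl k)) +
     (\<Sum>i<m'. if (r, i) \<in> snd \<mu> then {#Inr i#} else {#})"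

definition wfm :: "nat \<Rightarrow> nat \<Rightarrow> nat \<Rightarrow> smon \<Rightarrow> bool" where
  "wfm n m m' \<mu> \<longleftrightarrow> (\<forall>r k. \<not> (r < n \<and> k < m) \<longrightarrow> fst \<mu> r k = 0) \<and> snd \<mu> \<subseteq> {..<n} \<times> {..<m'}"

definition Pm :: "nat \<Rightarrow> nat \<Rightarrow> nat \<Rightarrow> smon \<Rightarrow> (nat + nat) multiset multiset" where
  "Pm n m m' \<mu> = filter_mset (\<lambda>p. p \<noteq> {#}) (image_mset (rowc m m' \<mu>) (mset_set {..<n}))"

lemma count_if_mset: "count (if c then A else B) x = (if c then count A x else count B x)"
  by simp

lemma count_single_if: "count (if (r, a) \<in> T then {#Inr a#} else {#}) (Inr i) = (if a = i \<and> (r, a) \<in> T then 1 else 0)"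
  by auto

lemma count_single_if_Inl: "count (if (r, a) \<in> T then {#Inr a#} else {#}) (Inl k) = 0"
  by auto

lemma sum_delta_conj:
  assumes "finite A"
  shows "(\<Sum>a\<in>A. if a = i \<and> P a then (1::nat) else 0) = (if i \<in> A \<and> P i then 1 else 0)"
proof -
  have "(\<Sum>a\<in>A. if a = i \<and> P a then (1::nat) else 0) = (\<Sum>a\<in>A. if a = i then (if P i then 1 else 0) else 0)"
    by (rule sum.cong) auto
  also have "\<dots> = (if i \<in> A \<and> P i then 1 else 0)" using assms by (simp add: sum.delta')
  finally show ?thesis .
qed

lemma count_rowc_Inl: "count (rowc m m' \<mu> r) (Inl k) = (if k < m then fst \<mu> r k else 0)"
  by (simp add: rowc_def count_sum)

lemma count_rowc_Inr: "count (rowc m m' \<mu> r) (Inr i) = (if i < m' \<and> (r, i) \<in> snd \<mu> then 1 else 0)"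
  by (simp only: rowc_def count_union count_sum count_single_if count_single_if_Inl sum_delta_conj finite_lessThan lessThan_iff)
     (simp add: count_sum)

lemma count_content_Inl: "count (content m m' \<alpha> \<beta>) (Inl k) = (if k < m then \<alpha> k else 0)"
  by (simp add: content_def count_sum)

lemma count_content_Inr: "count (content m m' \<alpha> \<beta>) (Inr i) = (if i < m' then \<beta> i else 0)"
  by (simp add: content_def count_sum)

lemma mons_wfm: "\<mu> \<in> mons n m m' \<alpha> \<beta> \<Longrightarrow> wfm n m m' \<mu>"
  by (auto simp: mons_def wfm_def)

lemma rowc_eq_iff:
  assumes "wfm n m m' \<mu>" "wfm n m m' \<nu>"
  shows "rowc m m' \<mu> r = rowc m m' \<nu> s \<longleftrightarrow>
     (\<forall>k. fst \<mu> r k = fst \<nu> s k) \<and> (\<forall>i. (r, i) \<in> snd \<mu> \<longleftrightarrow> (s, i) \<in> snd \<nu>)"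
proof
  assume eq: "rowc m m' \<mu> r = rowc m m' \<nu> s"
  have "fst \<mu> r k = fst \<nu> s k" for k
  proof (cases "k < m")
    case True thus ?thesis using arg_cong[OF eq, of "\<lambda>p. count p (Inl k)"] by (simp add: count_rowc_Inl)
  next
    case False thus ?thesis using assms by (simp add: wfm_def)
  qed
  moreover have "(r, i) \<in> snd \<mu> \<longleftrightarrow> (s, i) \<in> snd \<nu>" for i
  proof (cases "i < m'")
    case True thus ?thesis using arg_cong[OF eq, of "\<lambda>p. count p (Inr i)"] by (simp add: count_rowc_Inr split: if_splits)
  next
    case False thus ?thesis using assms by (auto simp: wfm_def)
  qed
  ultimately show "(\<forall>k. fst \<mu> r k = fst \<nu> s k) \<and> (\<forall>i. (r, i) \<in> snd \<mu> \<longleftrightarrow> (s, i) \<in> snd \<nu>)" by blast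
next
  assume "(\<forall>k. fst \<mu> r k = fst \<nu> s k) \<and> (\<forall>i. (r, i) \<in> snd \<mu> \<longleftrightarrow> (s, i) \<in> snd \<nu>)"
  thus "rowc m m' \<mu> r = rowc m m' \<nu> s" by (simp add: rowc_def)
qed

lemma rowsame_iff: "wfm n m m' \<mu> \<Longrightarrow> rowsame \<mu> r s \<longleftrightarrow> rowc m m' \<mu> r = rowc m m' \<mu> s"
  using rowc_eq_iff[of n m m' \<mu> \<mu>] by (simp add: rowsame_def)

lemma count_sum_rows_Inl:
  "count (\<Sum>r<n. rowc m m' \<mu> r) (Inl k) = (if k < m then (\<Sum>r<n. fst \<mu> r k) else 0)"
  by (simp add: count_sum count_rowc_Inl)

lemma count_sum_rows_Inr:
  assumes "wfm n m m' \<mu>"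
  shows "count (\<Sum>r<n. rowc m m' \<mu> r) (Inr i) = (if i < m' then card {r. (r, i) \<in> snd \<mu>} else 0)"
proof -
  have "count (\<Sum>r<n. rowc m m' \<mu> r) (Inr i) = (\<Sum>r<n. if i < m' \<and> (r, i) \<in> snd \<mu> then 1 else 0)"
    by (simp add: count_sum count_rowc_Inr)
  also have "\<dots> = (if i < m' then card {r\<in>{..<n}. (r, i) \<in> snd \<mu>} else 0)"
    by (simp add: sum.inter_filter[symmetric])
  also have "{r\<in>{..<n}. (r, i) \<in> snd \<mu>} = {r. (r, i) \<in> snd \<mu>}"
    using assms by (auto simp: wfm_def)
  finally show ?thesis .
qed

lemma mons_iff_rows:
  assumes w: "wfm n m m' \<mu>"
  shows "\<mu> \<in> mons n m m' \<alpha> \<beta> \<longleftrightarrow> (\<Sum>r<n. rowc m m' \<mu> r) = content m m' \<alpha> \<beta>"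
proof
  assume mu: "\<mu> \<in> mons n m m' \<alpha> \<beta>"
  show "(\<Sum>r<n. rowc m m' \<mu> r) = content m m' \<alpha> \<beta>"
  proof (rule multiset_eqI)
    fix x
    show "count (\<Sum>r<n. rowc m m' \<mu> r) x = count (content m m' \<alpha> \<beta>) x"
    proof (cases x)
      case (Inl k) thus ?thesis using mu
        by (auto simp: count_sum_rows_Inl count_content_Inl mons_def)
    next
      case (Inr i) thus ?thesis using mu w
        by (auto simp: count_sum_rows_Inr count_content_Inr mons_def)
    qed
  qed
next
  assume eq: "(\<Sum>r<n. rowc m m' \<mu> r) = content m m' \<alpha> \<beta>"
  have 1: "(\<Sum>r<n. fst \<mu> r k) = \<alpha> k" if "k < m" for k
    using arg_cong[OF eq, of "\<lambda>p. count p (Inl k)"] that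
    by (simp add: count_sum_rows_Inl count_content_Inl)
  have 2: "card {r. (r, i) \<in> snd \<mu>} = \<beta> i" if "i < m'" for i
    using arg_cong[OF eq, of "\<lambda>p. count p (Inr i)"] that
    by (simp add: count_sum_rows_Inr[OF w] count_content_Inr)
  obtain e T where eT: "\<mu> = (e, T)" by (cases \<mu>)
  show "\<mu> \<in> mons n m m' \<alpha> \<beta>" using 1 2 w eT by (auto simp: mons_def wfm_def)
qed

lemma sum_mset_filter_zero:
  assumes "\<forall>x\<in>#M. \<not> P x \<longrightarrow> x = 0"
  shows "sum_mset (filter_mset P M) = sum_mset (M :: 'a::comm_monoid_add multiset)"
  using assms by (induct M) auto

lemma sum_mset_Pm: "sum_mset (Pm n m m' \<mu>) = (\<Sum>r<n. rowc m m' \<mu> r)"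
proof -
  have "sum_mset (Pm n m m' \<mu>) = sum_mset (image_mset (rowc m m' \<mu>) (mset_set {..<n}))"
    unfolding Pm_def by (rule sum_mset_filter_zero) auto
  thus ?thesis by (simp add: sum_unfold_sum_mset)
qed

lemma count_Pm: "count (Pm n m m' \<mu>) p = (if p = {#} then 0 else card {r\<in>{..<n}. rowc m m' \<mu> r = p})"
  by (simp add: Pm_def count_image_mset_eq_card_vimage)

lemma mem_sg_image: "bij \<sigma> \<Longrightarrow> (r, i) \<in> sg \<sigma> ` T \<longleftrightarrow> (inv \<sigma> r, i) \<in> T"
proof
  assume b: "bij \<sigma>" and "(r, i) \<in> sg \<sigma> ` T"
  then obtain x where x: "x \<in> T" "(r, i) = sg \<sigma> x" by auto
  hence "\<sigma> (fst x) = r" "snd x = i" by (auto simp: sg_def)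
  hence "x = (inv \<sigma> r, i)" using b by (auto simp: prod_eq_iff bij_inv_eq_iff)
  thus "(inv \<sigma> r, i) \<in> T" using x by simp
next
  assume b: "bij \<sigma>" and "(inv \<sigma> r, i) \<in> T"
  moreover have "sg \<sigma> (inv \<sigma> r, i) = (r, i)" using b by (simp add: sg_def surj_f_inv_f bij_is_surj)
  ultimately show "(r, i) \<in> sg \<sigma> ` T" by (metis image_eqI)
qed

lemma rowc_act: "bij \<sigma> \<Longrightarrow> rowc m m' (act_mon \<sigma> \<mu>) r = rowc m m' \<mu> (inv \<sigma> r)"
  by (simp add: rowc_def fst_act_mon snd_act_mon mem_sg_image)

lemma Pm_act:
  assumes p: "\<sigma> permutes {..<n}"
  shows "Pm n m m' (act_mon \<sigma> \<mu>) = Pm n m m' \<mu>"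
proof -
  have ip: "inv \<sigma> permutes {..<n}" using p by (rule permutes_inv)
  have "image_mset (rowc m m' (act_mon \<sigma> \<mu>)) (mset_set {..<n}) =
        image_mset (rowc m m' \<mu>) (image_mset (inv \<sigma>) (mset_set {..<n}))"
  proof -
    have "rowc m m' (act_mon \<sigma> \<mu>) = rowc m m' \<mu> \<circ> inv \<sigma>"
      using rowc_act[OF permutes_bij[OF p]] by (simp add: fun_eq_iff)
    thus ?thesis by (simp add: multiset.map_comp)
  qed
  also have "image_mset (inv \<sigma>) (mset_set {..<n}) = mset_set {..<n}"
    using image_mset_mset_set[OF permutes_inj_on[OF ip]] permutes_image[OF ip] by simp
  finally show ?thesis by (simp add: Pm_def)
qed

lemma barred_rowc:
  assumes w: "wfm n m m' \<mu>"
  shows "barred_count (rowc m m' \<mu> r) = card {i. (r, i) \<in> snd \<mu>}"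
proof -
  have "filter_mset (\<lambda>x. \<exists>i. x = Inr i) (rowc m m' \<mu> r) = (\<Sum>i<m'. if (r, i) \<in> snd \<mu> then {#Inr i#} else {#})"
  proof (rule multiset_eqI)
    fix x
    show "count (filter_mset (\<lambda>x. \<exists>i. x = Inr i) (rowc m m' \<mu> r)) x =
          count (\<Sum>i<m'. if (r, i) \<in> snd \<mu> then {#Inr i#} else {#}) x"
      by (cases x) (simp_all only: count_sum count_rowc_Inr count_single_if count_single_if_Inl sum_delta_conj finite_lessThan lessThan_iff count_filter_mset, auto)
  qed
  hence "barred_count (rowc m m' \<mu> r) = (\<Sum>i<m'. if (r, i) \<in> snd \<mu> then 1 else 0)"
    by (simp add: barred_count_def if_distrib cong: if_cong)
  also have "\<dots> = card {i\<in>{..<m'}. (r, i) \<in> snd \<mu>}"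
    by (simp add: sum.inter_filter[symmetric])
  also have "{i\<in>{..<m'}. (r, i) \<in> snd \<mu>} = {i. (r, i) \<in> snd \<mu>}"
    using w by (auto simp: wfm_def)
  finally show ?thesis .
qed

definition Goodm :: "nat \<Rightarrow> nat \<Rightarrow> nat \<Rightarrow> smon \<Rightarrow> bool" where
  "Goodm n m m' \<mu> \<longleftrightarrow> (\<forall>r<n. \<forall>s<n. r \<noteq> s \<and> rowc m m' \<mu> r = rowc m m' \<mu> s \<longrightarrow> even (barred_count (rowc m m' \<mu> r)))"

lemma mem_Pm: "p \<in># Pm n m m' \<mu> \<longleftrightarrow> p \<noteq> {#} \<and> (\<exists>r<n. rowc m m' \<mu> r = p)"
  by (auto simp: Pm_def)

lemma barred_empty: "barred_count {#} = 0" by (simp add: barred_count_def)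

lemma Pm_super_iff:
  assumes mu: "\<mu> \<in> mons n m m' \<alpha> \<beta>"
  shows "Pm n m m' \<mu> \<in> super_mset_partitions n m m' \<alpha> \<beta> \<longleftrightarrow> Goodm n m m' \<mu>"
proof -
  have w: "wfm n m m' \<mu>" using mu by (rule mons_wfm)
  have c1: "\<forall>p \<in># Pm n m m' \<mu>. p \<noteq> {#}" by (simp add: mem_Pm)
  have c2: "sum_mset (Pm n m m' \<mu>) = content m m' \<alpha> \<beta>"
    using sum_mset_Pm mons_iff_rows[OF w] mu by simp
  have c3: "size (Pm n m m' \<mu>) \<le> n"
  proof -
    have "size (Pm n m m' \<mu>) \<le> size (image_mset (rowc m m' \<mu>) (mset_set {..<n}))"
      unfolding Pm_def by (rule size_filter_mset_lesseq)
    thus ?thesis by simp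
  qed
  have c4: "\<forall>p \<in># Pm n m m' \<mu>. \<forall>i. count p (Inr i) \<le> 1"
    by (auto simp: mem_Pm count_rowc_Inr)
  have c5: "(\<forall>p \<in># Pm n m m' \<mu>. odd (barred_count p) \<longrightarrow> count (Pm n m m' \<mu>) p = 1) \<longleftrightarrow> Goodm n m m' \<mu>"
  proof
    assume H: "\<forall>p \<in># Pm n m m' \<mu>. odd (barred_count p) \<longrightarrow> count (Pm n m m' \<mu>) p = 1"
    show "Goodm n m m' \<mu>" unfolding Goodm_def
    proof (intro allI impI, rule ccontr)
      fix r s assume rs: "r < n" "s < n" "r \<noteq> s \<and> rowc m m' \<mu> r = rowc m m' \<mu> s"
        and od: "odd (barred_count (rowc m m' \<mu> r))"
      define p where "p = rowc m m' \<mu> r"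
      have pne: "p \<noteq> {#}" using od barred_empty p_def by auto
      have pin: "p \<in># Pm n m m' \<mu>" using pne rs by (auto simp: mem_Pm p_def)
      have "count (Pm n m m' \<mu>) p = 1" using H pin od p_def by auto
      hence "card {x\<in>{..<n}. rowc m m' \<mu> x = p} = 1" using pne by (simp add: count_Pm)
      moreover have "{r, s} \<subseteq> {x\<in>{..<n}. rowc m m' \<mu> x = p}" using rs by (auto simp: p_def)
      hence "card {r, s} \<le> card {x\<in>{..<n}. rowc m m' \<mu> x = p}" by (intro card_mono) auto
      ultimately show False using rs by simp
    qed
  next
    assume G: "Goodm n m m' \<mu>"
    show "\<forall>p \<in># Pm n m m' \<mu>. odd (barred_count p) \<longrightarrow> count (Pm n m m' \<mu>) p = 1"
    proof (intro ballI impI)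
      fix p assume pin: "p \<in># Pm n m m' \<mu>" and od: "odd (barred_count p)"
      then obtain r where r: "r < n" "rowc m m' \<mu> r = p" and pne: "p \<noteq> {#}" by (auto simp: mem_Pm)
      have "{x\<in>{..<n}. rowc m m' \<mu> x = p} = {r}"
      proof (rule set_eqI, rule iffI)
        fix x assume "x \<in> {x\<in>{..<n}. rowc m m' \<mu> x = p}"
        hence x: "x < n" "rowc m m' \<mu> x = p" by auto
        show "x \<in> {r}"
        proof (rule ccontr)
          assume "x \<notin> {r}"
          hence "x \<noteq> r" by simp
          hence "even (barred_count (rowc m m' \<mu> x))" using G x r unfolding Goodm_def by metis
          thus False using od x by simp
        qed
      qed (use r in auto)
      thus "count (Pm n m m' \<mu>) p = 1" using pne by (simp add: count_Pm)
    qed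
  qed
  show ?thesis using c1 c2 c3 c4 c5 by (simp add: super_mset_partitions_def)
qed

lemma Goodm_stab:
  assumes "wfm n m m' \<mu>" "Goodm n m m' \<mu>"
  shows "\<forall>r<n. \<forall>s<n. r \<noteq> s \<and> rowsame \<mu> r s \<longrightarrow> even (card {i. (r, i) \<in> snd \<mu>})"
  using assms by (simp add: Goodm_def rowsame_iff barred_rowc)

lemma count_le_sum_mset:
  assumes "x \<in># M" shows "count x a \<le> count (sum_mset M) a"
  using sum_mset.remove[OF assms] by (metis count_union le_add1)

lemma Pm_exists:
  assumes pi: "\<pi> \<in> super_mset_partitions n m m' \<alpha> \<beta>"
  shows "\<exists>\<mu> \<in> mons n m m' \<alpha> \<beta>. Pm n m m' \<mu> = \<pi>"
proof -
  have ne: "\<forall>p\<in>#\<pi>. p \<noteq> {#}" and sm: "sum_mset \<pi> = content m m' \<alpha> \<beta>" and sz: "size \<pi> \<le> n"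
    and one: "\<forall>p\<in>#\<pi>. \<forall>i. count p (Inr i) \<le> 1"
    using pi by (auto simp: super_mset_partitions_def)
  obtain ps where ps: "mset ps = \<pi>" using ex_mset by blast
  define qs where "qs = ps @ replicate (n - length ps) {#}"
  have lq: "length qs = n" using sz ps by (auto simp: qs_def)
  have smq: "sum_mset (mset qs) = content m m' \<alpha> \<beta>" using sm ps by (simp add: qs_def)
  have bnd: "count (qs ! r) a \<le> count (content m m' \<alpha> \<beta>) a" if "r < n" for r a
  proof -
    have "qs ! r \<in># mset qs" using that lq by simp
    from count_le_sum_mset[OF this] show ?thesis using smq by simp
  qed
  have one': "count (qs ! r) (Inr i) \<le> 1" if "r < n" for r i
  proof -
    have "qs ! r \<in> set qs" using that lq by simp
    hence "qs ! r \<in># \<pi> \<or> qs ! r = {#}" using ps by (auto simp: qs_def)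
    thus ?thesis using one by auto
  qed
  define \<mu> :: smon where "\<mu> = (\<lambda>r k. if r < n \<and> k < m then count (qs ! r) (Inl k) else 0,
      {(r, i). r < n \<and> i < m' \<and> Inr i \<in># qs ! r})"
  have w: "wfm n m m' \<mu>" by (auto simp: wfm_def \<mu>_def)
  have rw: "rowc m m' \<mu> r = qs ! r" if r: "r < n" for r
  proof (rule multiset_eqI)
    fix x show "count (rowc m m' \<mu> r) x = count (qs ! r) x"
    proof (cases x)
      case (Inl k)
      show ?thesis
      proof (cases "k < m")
        case True thus ?thesis using Inl r by (simp add: count_rowc_Inl \<mu>_def)
      next
        case False thus ?thesis using Inl bnd[OF r, of x] by (simp add: count_rowc_Inl count_content_Inl)
      qed
    next
      case (Inr i)
      show ?thesis
      proof (cases "i < m'")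
        case True
        have "Inr i \<in># qs ! r \<longleftrightarrow> count (qs ! r) (Inr i) = 1"
          using one'[OF r, of i] count_greater_zero_iff[of "qs ! r" "Inr i"] by linarith
        moreover have "Inr i \<notin># qs ! r \<longleftrightarrow> count (qs ! r) (Inr i) = 0" by (simp add: not_in_iff)
        ultimately show ?thesis using True Inr r by (auto simp: count_rowc_Inr \<mu>_def)
      next
        case False thus ?thesis using Inr bnd[OF r, of x] by (simp add: count_rowc_Inr count_content_Inr \<mu>_def)
      qed
    qed
  qed
  have im: "image_mset (rowc m m' \<mu>) (mset_set {..<n}) = mset qs"
  proof -
    have "mset qs = mset (map (\<lambda>i. qs ! i) [0..<n])" using lq map_nth[of qs] by simp
    also have "\<dots> = image_mset (\<lambda>i. qs ! i) (mset_set {..<n})" by (simp add: atLeast0LessThan)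
    also have "\<dots> = image_mset (rowc m m' \<mu>) (mset_set {..<n})"
      by (rule image_mset_cong) (simp add: rw)
    finally show ?thesis by simp
  qed
  have P: "Pm n m m' \<mu> = \<pi>"
  proof -
    have "Pm n m m' \<mu> = filter_mset (\<lambda>p. p \<noteq> {#}) (mset ps) + filter_mset (\<lambda>p. p \<noteq> {#}) (replicate_mset (n - length ps) {#})"
      by (simp add: Pm_def im qs_def)
    also have "filter_mset (\<lambda>p. p \<noteq> {#}) (replicate_mset (n - length ps) {#}) = {#}"
      by (induct "n - length ps") auto
    also have "filter_mset (\<lambda>p. p \<noteq> {#}) (mset ps) = mset ps"
      using ne ps by (simp add: filter_mset_eq_conv)
    finally show ?thesis using ps by simp
  qed
  have "\<mu> \<in> mons n m m' \<alpha> \<beta>"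
    using mons_iff_rows[OF w] sum_mset_Pm[of n m m' \<mu>] P sm by simp
  thus ?thesis using P by blast
qed

lemma filter_size_eq:
  assumes "size A = size B" "filter_mset (\<lambda>p. p \<noteq> c) A = filter_mset (\<lambda>p. p \<noteq> c) B"
  shows "A = B"
proof (rule multiset_eqI)
  fix x
  have sz: "size M = size (filter_mset (\<lambda>p. p \<noteq> c) M) + count M c" for M :: "'a multiset"
  proof -
    have "M = filter_mset (\<lambda>p. p \<noteq> c) M + filter_mset (\<lambda>p. p = c) M"
      using multiset_partition[of M "\<lambda>p. p \<noteq> c"] by simp
    hence "size M = size (filter_mset (\<lambda>p. p \<noteq> c) M) + size (filter_mset (\<lambda>p. p = c) M)"
      by (metis size_union)
    thus ?thesis by (simp add: filter_eq_replicate_mset)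
  qed
  show "count A x = count B x"
  proof (cases "x = c")
    case True
    thus ?thesis using sz[of A] sz[of B] assms by simp
  next
    case False
    thus ?thesis using arg_cong[OF assms(2), of "\<lambda>M. count M x"] by simp
  qed
qed

lemma same_orbit:
  assumes mu: "\<mu> \<in> mons n m m' \<alpha> \<beta>" and nu: "\<nu> \<in> mons n m m' \<alpha> \<beta>"
    and eq: "Pm n m m' \<mu> = Pm n m m' \<nu>"
  shows "\<exists>\<sigma>. \<sigma> permutes {..<n} \<and> act_mon \<sigma> \<mu> = \<nu>"
proof -
  have wm: "wfm n m m' \<mu>" and wn: "wfm n m m' \<nu>" using mu nu by (auto intro: mons_wfm)
  define xs where "xs = map (rowc m m' \<nu>) [0..<n]"
  define ys where "ys = map (rowc m m' \<mu>) [0..<n]"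
  have "image_mset (rowc m m' \<nu>) (mset_set {..<n}) = image_mset (rowc m m' \<mu>) (mset_set {..<n})"
    by (rule filter_size_eq[where c="{#}"]) (use eq in \<open>simp_all add: Pm_def\<close>)
  hence "mset xs = mset ys" by (simp add: xs_def ys_def atLeast0LessThan)
  then obtain p where p0: "p permutes {..<length ys}" and pl: "permute_list p ys = xs"
    by (rule mset_eq_permutation)
  have ly: "length ys = n" by (simp add: ys_def)
  have p: "p permutes {..<n}" using p0 ly by simp
  have rw: "rowc m m' \<nu> i = rowc m m' \<mu> (p i)" if "i < n" for i
  proof -
    have "xs ! i = permute_list p ys ! i" using pl by simp
    also have "\<dots> = ys ! p i" using permute_list_nth[OF p0] that ly by simp
    finally show ?thesis using that permutes_in_image[OF p, of i] by (simp add: xs_def ys_def)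
  qed
  define \<sigma> where "\<sigma> = inv p"
  have sp: "\<sigma> permutes {..<n}" unfolding \<sigma>_def by (rule permutes_inv[OF p])
  have ii: "inv \<sigma> = p" unfolding \<sigma>_def by (rule inv_inv_eq[OF permutes_bij[OF p]])
  have fe: "fst \<mu> (p r) k = fst \<nu> r k" for r k
  proof (cases "r < n")
    case True thus ?thesis using rw[OF True] rowc_eq_iff[OF wn wm] by metis
  next
    case False thus ?thesis using wm wn permutes_not_in[OF p, of r] by (simp add: wfm_def)
  qed
  have te: "(p r, i) \<in> snd \<mu> \<longleftrightarrow> (r, i) \<in> snd \<nu>" for r i
  proof (cases "r < n")
    case True thus ?thesis using rw[OF True] rowc_eq_iff[OF wn wm] by metis
  next
    case False thus ?thesis using wm wn permutes_not_in[OF p, of r] by (auto simp: wfm_def)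
  qed
  have "fst (act_mon \<sigma> \<mu>) = fst \<nu>" by (simp add: fun_eq_iff fst_act_mon ii fe)
  moreover have "snd (act_mon \<sigma> \<mu>) = snd \<nu>"
  proof (rule set_eqI)
    fix x :: "nat \<times> nat"
    obtain r i where x: "x = (r, i)" by (cases x)
    show "x \<in> snd (act_mon \<sigma> \<mu>) \<longleftrightarrow> x \<in> snd \<nu>"
      unfolding x snd_act_mon mem_sg_image[OF permutes_bij[OF sp]] ii by (rule te)
  qed
  ultimately have "act_mon \<sigma> \<mu> = \<nu>" by (simp add: prod_eq_iff)
  thus ?thesis using sp by blast
qed

lemma bad_zero:
  assumes mu: "\<mu> \<in> mons n m m' \<alpha> \<beta>" and bad: "\<not> Goodm n m m' \<mu>"
    and f: "f \<in> inv_component n m m' \<alpha> \<beta>"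
  shows "f \<mu> = 0"
proof -
  have w: "wfm n m m' \<mu>" using mu by (rule mons_wfm)
  obtain r s where rs: "r < n" "s < n" "r \<noteq> s" "rowc m m' \<mu> r = rowc m m' \<mu> s"
    and od: "odd (barred_count (rowc m m' \<mu> r))"
    using bad unfolding Goodm_def by blast
  have same: "rowsame \<mu> r s" using rs rowsame_iff[OF w] by simp
  have tp: "transpose r s permutes {..<n}" using rs by (simp add: permutes_swap_id)
  have fx: "act_mon (transpose r s) \<mu> = \<mu>" by (rule transp_fix[OF same])
  have "act_sign (transpose r s) \<mu> = (-1) ^ card {i. (r, i) \<in> snd \<mu>}"
    by (rule transp_sign[OF mons_finite_T[OF mu] rs(3)]) (use same in \<open>simp add: rowsame_def\<close>)
  also have "\<dots> = -1" using od barred_rowc[OF w] by simp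
  finally have sgn: "act_sign (transpose r s) \<mu> = -1" .
  have "f (act_mon (transpose r s) \<mu>) = act_sign (transpose r s) \<mu> * f \<mu>"
    using f tp mu by (simp add: inv_component_def)
  hence "f \<mu> = - f \<mu>" using fx sgn by simp
  thus ?thesis by simp
qed

lemma sign_wd:
  assumes mu: "\<mu> \<in> mons n m m' \<alpha> \<beta>" and G: "Goodm n m m' \<mu>"
    and s: "\<sigma> permutes {..<n}" and t: "\<tau> permutes {..<n}"
    and eq: "act_mon \<sigma> \<mu> = act_mon \<tau> \<mu>"
  shows "act_sign \<sigma> \<mu> = act_sign \<tau> \<mu>"
proof -
  have w: "wfm n m m' \<mu>" using mu by (rule mons_wfm)
  have fin: "finite (snd \<mu>)" using mu by (rule mons_finite_T)
  define \<theta> where "\<theta> = inv \<tau> \<circ> \<sigma>"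
  have it: "inv \<tau> permutes {..<n}" using t by (rule permutes_inv)
  have thp: "\<theta> permutes {..<n}" unfolding \<theta>_def by (rule permutes_compose[OF s it])
  have "act_mon \<theta> \<mu> = act_mon (inv \<tau>) (act_mon \<tau> \<mu>)"
    unfolding \<theta>_def using act_mon_comp[OF permutes_bij[OF it] permutes_bij[OF s]] eq by simp
  also have "\<dots> = act_mon (inv \<tau> \<circ> \<tau>) \<mu>"
    using act_mon_comp[OF permutes_bij[OF it] permutes_bij[OF t]] by simp
  also have "inv \<tau> \<circ> \<tau> = id" using permutes_inv_o(2)[OF t] .
  finally have thfix: "act_mon \<theta> \<mu> = \<mu>" using act_mon_id[of \<mu>] by (simp add: id_def)
  have th1: "act_sign \<theta> \<mu> = 1"
    by (rule stab_sign[OF fin Goodm_stab[OF w G] thp thfix])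
  have "\<tau> \<circ> \<theta> = \<sigma>" unfolding \<theta>_def using permutes_inverses(1)[OF t] by (simp add: fun_eq_iff)
  hence "act_sign \<sigma> \<mu> = act_sign \<tau> (act_mon \<theta> \<mu>) * act_sign \<theta> \<mu>"
    using sign_cocycle[OF permutes_bij[OF t] permutes_bij[OF thp] fin] by simp
  thus ?thesis using thfix th1 by simp
qed

interpretation FV: vector_space "\<lambda>(c::complex) (f::smon \<Rightarrow> complex) x. c * f x"
  by unfold_locales (auto simp: fun_eq_iff algebra_simps)

lemma sum_fun_apply: "(\<Sum>v\<in>A. g v) x = (\<Sum>v\<in>A. g v x)"
  by (induct A rule: infinite_finite_induct) auto

lemma mons_finite: "finite (mons n m m' \<alpha> \<beta>)"
proof -
  define N where "N = (\<Sum>k<m. \<alpha> k)"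
  define G where "G = {g :: nat \<times> nat \<Rightarrow> nat. \<forall>x. (x \<in> {..<n} \<times> {..<m} \<longrightarrow> g x \<in> {..N}) \<and> (x \<notin> {..<n} \<times> {..<m} \<longrightarrow> g x = 0)}"
  have fG: "finite G" unfolding G_def by (rule finite_set_of_finite_funs) auto
  have sub: "mons n m m' \<alpha> \<beta> \<subseteq> (\<lambda>(g, T). (curry g, T)) ` (G \<times> Pow ({..<n} \<times> {..<m'}))"
  proof
    fix \<mu> assume mu: "\<mu> \<in> mons n m m' \<alpha> \<beta>"
    obtain e T where eT: "\<mu> = (e, T)" by (cases \<mu>)
    have z: "\<forall>r k. \<not> (r < n \<and> k < m) \<longrightarrow> e r k = 0" and Ts: "T \<subseteq> {..<n} \<times> {..<m'}"
      and sa: "\<forall>k<m. (\<Sum>r<n. e r k) = \<alpha> k" using mu eT by (auto simp: mons_def)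
    have le: "e r k \<le> N" if "r < n" "k < m" for r k
    proof -
      have "e r k \<le> (\<Sum>r<n. e r k)" using that by (intro member_le_sum) auto
      also have "\<dots> = \<alpha> k" using sa that by simp
      also have "\<alpha> k \<le> N" unfolding N_def using that by (intro member_le_sum) auto
      finally show ?thesis .
    qed
    have "case_prod e \<in> G" using z le by (auto simp: G_def)
    moreover have "\<mu> = (\<lambda>(g, T). (curry g, T)) (case_prod e, T)" using eT by simp
    ultimately show "\<mu> \<in> (\<lambda>(g, T). (curry g, T)) ` (G \<times> Pow ({..<n} \<times> {..<m'}))"
      using Ts by blast
  qed
  show ?thesis by (rule finite_subset[OF sub]) (use fG in auto)
qed

theorem corollary4p1:
  fixes n m m' :: nat and \<alpha> \<beta> :: "nat \<Rightarrow> nat"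
  assumes "n \<ge> 1"
  shows "cdim (inv_component n m m' \<alpha> \<beta>) = card (super_mset_partitions n m m' \<alpha> \<beta>)"
proof -
  define M where "M = mons n m m' \<alpha> \<beta>"
  define V where "V = inv_component n m m' \<alpha> \<beta>"
  define S where "S = super_mset_partitions n m m' \<alpha> \<beta>"
  define rep where "rep \<pi> = (SOME \<mu>. \<mu> \<in> M \<and> Pm n m m' \<mu> = \<pi>)" for \<pi>
  define b where "b \<pi> \<mu> = (if \<mu> \<in> M \<and> Pm n m m' \<mu> = \<pi> then
      act_sign (SOME \<sigma>. \<sigma> permutes {..<n} \<and> act_mon \<sigma> (rep \<pi>) = \<mu>) (rep \<pi>) else 0)" for \<pi> \<mu>
  have rep: "rep \<pi> \<in> M \<and> Pm n m m' (rep \<pi>) = \<pi>" if "\<pi> \<in> S" for \<pi>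
  proof -
    have "\<exists>\<mu>. \<mu> \<in> M \<and> Pm n m m' \<mu> = \<pi>" using Pm_exists[of \<pi> n m m' \<alpha> \<beta>] that unfolding M_def S_def by blast
    thus ?thesis unfolding rep_def by (rule someI_ex)
  qed
  have repG: "Goodm n m m' (rep \<pi>)" if "\<pi> \<in> S" for \<pi>
    using rep[OF that] Pm_super_iff[of "rep \<pi>" n m m' \<alpha> \<beta>] that by (simp add: M_def S_def)
  have bval: "b \<pi> (act_mon \<sigma> (rep \<pi>)) = act_sign \<sigma> (rep \<pi>)" if pi: "\<pi> \<in> S" and s: "\<sigma> permutes {..<n}" for \<pi> \<sigma>
  proof -
    define \<mu> where "\<mu> = act_mon \<sigma> (rep \<pi>)"
    have muM: "\<mu> \<in> M" using act_mon_mons[OF s] rep[OF pi] by (simp add: \<mu>_def M_def)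
    have Pmu: "Pm n m m' \<mu> = \<pi>" using Pm_act[OF s] rep[OF pi] by (simp add: \<mu>_def)
    have ex: "\<exists>\<sigma>'. \<sigma>' permutes {..<n} \<and> act_mon \<sigma>' (rep \<pi>) = \<mu>" using s \<mu>_def by blast
    define \<sigma>' where "\<sigma>' = (SOME \<sigma>'. \<sigma>' permutes {..<n} \<and> act_mon \<sigma>' (rep \<pi>) = \<mu>)"
    have s': "\<sigma>' permutes {..<n} \<and> act_mon \<sigma>' (rep \<pi>) = \<mu>" unfolding \<sigma>'_def by (rule someI_ex[OF ex])
    have "act_sign \<sigma>' (rep \<pi>) = act_sign \<sigma> (rep \<pi>)"
      using sign_wd[of "rep \<pi>" n m m' \<alpha> \<beta> \<sigma>' \<sigma>] rep[OF pi] repG[OF pi] s s' by (simp add: M_def \<mu>_def)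
    thus ?thesis using muM Pmu by (simp add: b_def \<sigma>'_def \<mu>_def)
  qed
  have bsupp: "b \<pi> \<mu> \<noteq> 0 \<Longrightarrow> \<mu> \<in> M \<and> Pm n m m' \<mu> = \<pi>" for \<pi> \<mu>
    by (auto simp: b_def split: if_splits)
  have brep: "b \<pi> (rep \<pi>) = 1" if "\<pi> \<in> S" for \<pi>
    using bval[OF that permutes_id] act_sign_id[of "rep \<pi>"] act_mon_id[of "rep \<pi>"] by simp
  have bV: "b \<pi> \<in> V" if pi: "\<pi> \<in> S" for \<pi>
  proof -
    have 1: "\<forall>\<mu>. \<mu> \<notin> M \<longrightarrow> b \<pi> \<mu> = 0" by (simp add: b_def)
    have 2: "b \<pi> (act_mon \<rho> \<mu>) = act_sign \<rho> \<mu> * b \<pi> \<mu>" if r: "\<rho> permutes {..<n}" and mu: "\<mu> \<in> M" for \<rho> \<mu>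
    proof (cases "Pm n m m' \<mu> = \<pi>")
      case True
      obtain \<sigma> where s: "\<sigma> permutes {..<n}" and sm: "act_mon \<sigma> (rep \<pi>) = \<mu>"
        using same_orbit[of "rep \<pi>" n m m' \<alpha> \<beta> \<mu>] rep[OF pi] mu True by (auto simp: M_def)
      have rs: "\<rho> \<circ> \<sigma> permutes {..<n}" by (rule permutes_compose[OF s r])
      have "act_mon \<rho> \<mu> = act_mon (\<rho> \<circ> \<sigma>) (rep \<pi>)"
        using act_mon_comp[OF permutes_bij[OF r] permutes_bij[OF s]] sm by simp
      hence "b \<pi> (act_mon \<rho> \<mu>) = act_sign (\<rho> \<circ> \<sigma>) (rep \<pi>)" using bval[OF pi rs] by simp
      also have "\<dots> = act_sign \<rho> \<mu> * act_sign \<sigma> (rep \<pi>)"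
        using sign_cocycle[OF permutes_bij[OF r] permutes_bij[OF s] mons_finite_T[of "rep \<pi>" n m m' \<alpha> \<beta>]] rep[OF pi] sm
        by (simp add: M_def)
      also have "act_sign \<sigma> (rep \<pi>) = b \<pi> \<mu>" using bval[OF pi s] sm by simp
      finally show ?thesis .
    next
      case False
      hence "Pm n m m' (act_mon \<rho> \<mu>) \<noteq> \<pi>" using Pm_act[OF r] by simp
      thus ?thesis using False by (simp add: b_def)
    qed
    show ?thesis using 1 2 by (simp add: V_def inv_component_def M_def)
  qed
  have fS: "finite S"
  proof -
    have "S \<subseteq> Pm n m m' ` M" using rep by force
    thus ?thesis using mons_finite by (metis M_def finite_surj)
  qed
  have injb: "inj_on b S"
  proof (rule inj_onI)
    fix \<pi> \<pi>' assume pi: "\<pi> \<in> S" and pi': "\<pi>' \<in> S" and eq: "b \<pi> = b \<pi>'"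
    have "b \<pi>' (rep \<pi>) = 1" using brep[OF pi] eq by simp
    hence "Pm n m m' (rep \<pi>) = \<pi>'" using bsupp[of \<pi>' "rep \<pi>"] by simp
    thus "\<pi> = \<pi>'" using rep[OF pi] by simp
  qed
  have indep: "FV.independent (b ` S)"
    unfolding FV.independent_explicit_finite_subsets
  proof (intro allI impI ballI)
    fix T u v
    assume T: "T \<subseteq> b ` S" and fT: "finite T"
      and sum0: "(\<Sum>v\<in>T. (\<lambda>x. u v * v x)) = 0" and v: "v \<in> T"
    obtain \<pi> where pi: "\<pi> \<in> S" and vb: "v = b \<pi>" using T v by auto
    have "0 = (\<Sum>w\<in>T. (\<lambda>x. u w * w x)) (rep \<pi>)" using sum0 by simp
    also have "\<dots> = (\<Sum>w\<in>T. u w * w (rep \<pi>))" by (simp add: sum_fun_apply)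
    also have "\<dots> = (\<Sum>w\<in>T. if w = v then u v else 0)"
    proof (rule sum.cong[OF refl])
      fix w assume w: "w \<in> T"
      then obtain \<pi>' where pi': "\<pi>' \<in> S" and wb: "w = b \<pi>'" using T by auto
      show "u w * w (rep \<pi>) = (if w = v then u v else 0)"
      proof (cases "w = v")
        case True thus ?thesis using brep[OF pi] vb by simp
      next
        case False
        hence "\<pi>' \<noteq> \<pi>" using wb vb by auto
        hence "w (rep \<pi>) = 0" using bsupp[of \<pi>' "rep \<pi>"] rep[OF pi] wb by auto
        thus ?thesis using False by simp
      qed
    qed
    also have "\<dots> = u v" using fT v by simp
    finally show "u v = 0" by simp
  qed
  have span: "V \<subseteq> FV.span (b ` S)"
  proof
    fix f assume f: "f \<in> V"
    have fz: "\<forall>\<mu>. \<mu> \<notin> M \<longrightarrow> f \<mu> = 0" and finv: "\<forall>\<sigma>. \<sigma> permutes {..<n} \<longrightarrow>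
         (\<forall>\<mu> \<in> M. f (act_mon \<sigma> \<mu>) = act_sign \<sigma> \<mu> * f \<mu>)"
      using f by (auto simp: V_def inv_component_def M_def)
    have feq: "f = (\<Sum>\<pi>\<in>S. (\<lambda>x. f (rep \<pi>) * b \<pi> x))"
    proof (rule ext)
      fix \<mu>
      have "(\<Sum>\<pi>\<in>S. (\<lambda>x. f (rep \<pi>) * b \<pi> x)) \<mu> = (\<Sum>\<pi>\<in>S. f (rep \<pi>) * b \<pi> \<mu>)"
        by (simp add: sum_fun_apply)
      also have "\<dots> = f \<mu>"
      proof (cases "\<mu> \<in> M \<and> Goodm n m m' \<mu>")
        case True
        define \<pi>0 where "\<pi>0 = Pm n m m' \<mu>"
        have p0: "\<pi>0 \<in> S" using Pm_super_iff[of \<mu> n m m' \<alpha> \<beta>] True by (simp add: \<pi>0_def S_def M_def)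
        have "(\<Sum>\<pi>\<in>S. f (rep \<pi>) * b \<pi> \<mu>) = (\<Sum>\<pi>\<in>S. if \<pi> = \<pi>0 then f (rep \<pi>0) * b \<pi>0 \<mu> else 0)"
        proof (rule sum.cong[OF refl])
          fix \<pi> assume "\<pi> \<in> S"
          show "f (rep \<pi>) * b \<pi> \<mu> = (if \<pi> = \<pi>0 then f (rep \<pi>0) * b \<pi>0 \<mu> else 0)"
            using bsupp[of \<pi> \<mu>] \<pi>0_def by auto
        qed
        also have "\<dots> = f (rep \<pi>0) * b \<pi>0 \<mu>" using fS p0 by simp
        also have "\<dots> = f \<mu>"
        proof -
          obtain \<sigma> where s: "\<sigma> permutes {..<n}" and sm: "act_mon \<sigma> (rep \<pi>0) = \<mu>"
            using same_orbit[of "rep \<pi>0" n m m' \<alpha> \<beta> \<mu>] rep[OF p0] True \<pi>0_def by (auto simp: M_def)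
          have "b \<pi>0 \<mu> = act_sign \<sigma> (rep \<pi>0)" using bval[OF p0 s] sm by simp
          moreover have "f \<mu> = act_sign \<sigma> (rep \<pi>0) * f (rep \<pi>0)" using finv s rep[OF p0] sm by auto
          ultimately show ?thesis by simp
        qed
        finally show ?thesis .
      next
        case False
        have "f \<mu> = 0"
        proof (cases "\<mu> \<in> M")
          case True
          hence "\<not> Goodm n m m' \<mu>" using False by simp
          thus ?thesis using bad_zero[of \<mu> n m m' \<alpha> \<beta> f] True f by (simp add: M_def V_def)
        next
          case False thus ?thesis using fz by blast
        qed
        moreover have "b \<pi> \<mu> = 0" if "\<pi> \<in> S" for \<pi>
        proof (rule ccontr)
          assume "b \<pi> \<mu> \<noteq> 0"
          hence "\<mu> \<in> M" "Pm n m m' \<mu> = \<pi>" using bsupp by auto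
          hence "Goodm n m m' \<mu>" using Pm_super_iff[of \<mu> n m m' \<alpha> \<beta>] that by (simp add: M_def S_def)
          thus False using False \<open>\<mu> \<in> M\<close> by simp
        qed
        ultimately show ?thesis by simp
      qed
      finally show "f \<mu> = (\<Sum>\<pi>\<in>S. (\<lambda>x. f (rep \<pi>) * b \<pi> x)) \<mu>" by simp
    qed
    have "(\<Sum>\<pi>\<in>S. (\<lambda>x. f (rep \<pi>) * b \<pi> x)) \<in> FV.span (b ` S)"
    proof (rule FV.span_sum)
      fix \<pi> assume "\<pi> \<in> S"
      hence "b \<pi> \<in> FV.span (b ` S)" by (intro FV.span_base) auto
      from FV.span_scale[OF this, of "f (rep \<pi>)"] show "(\<lambda>x. f (rep \<pi>) * b \<pi> x) \<in> FV.span (b ` S)" .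
    qed
    thus "f \<in> FV.span (b ` S)" using feq by simp
  qed
  have "FV.dim V = card S"
    by (rule FV.dim_unique[OF _ span indep]) (use bV card_image[OF injb] in auto)
  thus ?thesis by (simp add: cdim_def V_def S_def)
qed

end
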